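(* Let $(k_1,\dots,k_n) \in \mathbb{Z}_{\geq 1}^n$ and $i \in \mathbb{Z}_{\geq 2}$. Then $$\dim_{\mathbb{F}_2} \widetilde{\mathrm{Gov}}(V_{[k_1,\dots,k_n]}, i) = (k_1+\dots+k_n)\binom{n-1}{i-1} - \binom{n}{i}.$$
   Context: Let $m = k_1+\dots+k_n$, $V_{[k_1,\dots,k_n]} = \mathbb{F}_2^m$ with basis $e_1,\dots,e_m$ and dual basis $\chi_1,\dots,\chi_m$. For $h \in [n]$ let $f(h) = \{k_1+\dots+k_{h-1}+1,\dots,k_1+\dots+k_h\}$ (the $h$-th block), and for a subset $T \subseteq [m]$ put $f(T) = T$. For $A \subseteq [n]$ with $\#A = i \geq 2$, $x \in A$ and $T \subseteq f(x)$, regard $T$ as a new symbol and set $$\widetilde{\phi}_{(A,T)} = \sum_{\tau} \Big(\sum_{y_1 \in f(\tau(1))}\chi_{y_1}\Big)\otimes\cdots\otimes\Big(\sum_{y_i \in f(\tau(i))}\chi_{y_i}\Big),$$ the sum over bijections $\tau:\{1,\dots,i\} \to (A\setminus\{x\})\cup\{T\}$ with $\tau(i-1) = T$ or $\tau(i) = T$; here $\psi_1\otimes\cdots\otimes\psi_i$ denotes the multilinear map $(\sigma_1,\dots,\sigma_i)\mapsto\prod_s\psi_s(\sigma_s)$ on $(\mathbb{F}_2^m)^i$. $\widetilde{\mathrm{Gov}}(V_{[k_1,\dots,k_n]}, i)$ is the span of all $\widetilde{\phi}_{(A,T)}$ with $A \subseteq [n]$, $\#A = i$, $x \in A$, $T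 \subseteq f(x)$. *)

theory Defs
  imports Complex_Main "HOL-Library.Z2" "HOL-Library.Function_Algebras" "HOL-Library.FuncSet"
begin

text \<open>F_2 is the field type bit. A tuple (sigma_1,...,sigma_i) of vectors in F_2^m is
  encoded as sig :: nat => nat => bit, with sig s y the y-th coordinate (y in 1..m)
  of sigma_s (s in 1..i). Multilinear maps are functions of such tuples into bit.\<close>

type_synonym mlmap = "(nat \<Rightarrow> nat \<Rightarrow> bit) \<Rightarrow> bit"

definition mscale :: "bit \<Rightarrow> mlmap \<Rightarrow> mlmap" where
  "mscale c \<phi> = (\<lambda>sig. c * \<phi> sig)"

definition block :: "(nat \<Rightarrow> nat) \<Rightarrow> nat \<Rightarrow> nat set" where
  "block k h = {(\<Sum>j\<in>{1..<h}. k j) + 1 .. (\<Sum>j\<in>{1..h}. k j)}"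

text \<open>Symbols: Inl h for a block index h, Inr T for a new symbol T (a subset of [m]);
  f(Inl h) = block h, f(Inr T) = T.\<close>
definition fsym :: "(nat \<Rightarrow> nat) \<Rightarrow> nat + nat set \<Rightarrow> nat set" where
  "fsym k z = (case z of Inl h \<Rightarrow> block k h | Inr T \<Rightarrow> T)"

definition chisum :: "nat set \<Rightarrow> (nat \<Rightarrow> bit) \<Rightarrow> bit" where
  "chisum Y v = (\<Sum>y\<in>Y. v y)"

definition taus :: "nat \<Rightarrow> nat set \<Rightarrow> nat \<Rightarrow> nat set \<Rightarrow> (nat \<Rightarrow> nat + nat set) set" where
  "taus i A x T =
     {\<tau>. \<tau> \<in> {1..i} \<rightarrow>\<^sub>E (Inl ` (A - {x}) \<union> {Inr T})
         \<and> bij_betw \<tau> {1..i} (Inl ` (A - {x}) \<union> {Inr T})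
         \<and> (\<tau> (i - 1) = Inr T \<or> \<tau> i = Inr T)}"

definition phi_tilde :: "(nat \<Rightarrow> nat) \<Rightarrow> nat \<Rightarrow> nat set \<Rightarrow> nat \<Rightarrow> nat set \<Rightarrow> mlmap" where
  "phi_tilde k i A x T =
     (\<lambda>sig. \<Sum>\<tau>\<in>taus i A x T. \<Prod>s\<in>{1..i}. chisum (fsym k (\<tau> s)) (sig s))"

definition Gov_tilde :: "(nat \<Rightarrow> nat) \<Rightarrow> nat \<Rightarrow> nat \<Rightarrow> mlmap set" where
  "Gov_tilde k n i = module.span mscale
     {phi_tilde k i A x T | A x T. A \<subseteq> {1..n} \<and> card A = i \<and> x \<in> A \<and> T \<subseteq> block k x}"

end

theory Submission
  imports Defs
begin

interpretation VS: vector_space mscale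
  by unfold_locales (auto simp: mscale_def fun_eq_iff algebra_simps)

lemma sum_fun_apply': "(sum f A) z = (\<Sum>a\<in>A. f a z)"
  by (induction A rule: infinite_finite_induct) auto

definition Ps :: "nat \<Rightarrow> nat set \<Rightarrow> nat \<Rightarrow> (nat \<Rightarrow> nat) set" where
  "Ps i A x = {\<sigma>. \<sigma> \<in> {1..i} \<rightarrow>\<^sub>E A \<and> bij_betw \<sigma> {1..i} A \<and> (\<sigma> (i-1) = x \<or> \<sigma> i = x)}"

lemma rep:
  assumes "x \<in> A" "i \<ge> 2"
  shows "phi_tilde k i A x T sig =
    (\<Sum>\<sigma>\<in>Ps i A x. \<Prod>s\<in>{1..i}. chisum (if \<sigma> s = x then T else block k (\<sigma> s)) (sig s))"
proof -
  define \<rho> where "\<rho> = (\<lambda>h. if h = x then Inr T else (Inl h :: nat + nat set))"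
  define \<rho>' where "\<rho>' = (\<lambda>u::nat + nat set. case u of Inl h \<Rightarrow> h | Inr _ \<Rightarrow> x)"
  let ?B = "Inl ` (A - {x}) \<union> {Inr T}"
  have b1: "bij_betw \<rho> A ?B"
    by (rule bij_betw_byWitness[where f'=\<rho>']) (use assms in \<open>auto simp: \<rho>_def \<rho>'_def\<close>)
  have b2: "bij_betw \<rho>' ?B A"
    by (rule bij_betw_byWitness[where f'=\<rho>]) (use assms in \<open>auto simp: \<rho>_def \<rho>'_def\<close>)
  have i1: "i - 1 \<in> {1..i}" "i \<in> {1..i}" using assms by auto
  have bij: "bij_betw (\<lambda>\<sigma>. restrict (\<rho> \<circ> \<sigma>) {1..i}) (Ps i A x) (taus i A x T)"
  proof (rule bij_betw_byWitness[where f' = "\<lambda>\<tau>. restrict (\<rho>' \<circ> \<tau>) {1..i}"])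
    show "\<forall>a\<in>Ps i A x. restrict (\<rho>' \<circ> restrict (\<rho> \<circ> a) {1..i}) {1..i} = a"
      by (auto simp: Ps_def fun_eq_iff \<rho>_def \<rho>'_def PiE_def extensional_def)
    show "\<forall>a\<in>taus i A x T. restrict (\<rho> \<circ> restrict (\<rho>' \<circ> a) {1..i}) {1..i} = a"
      using assms by (auto simp: taus_def fun_eq_iff \<rho>_def \<rho>'_def PiE_def extensional_def Pi_def)
    show "(\<lambda>\<sigma>. restrict (\<rho> \<circ> \<sigma>) {1..i}) ` Ps i A x \<subseteq> taus i A x T"
    proof safe
      fix \<sigma> assume s: "\<sigma> \<in> Ps i A x"
      have "bij_betw (\<rho> \<circ> \<sigma>) {1..i} ?B"
        using s b1 by (auto simp: Ps_def intro: bij_betw_trans)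
      then have "bij_betw (restrict (\<rho> \<circ> \<sigma>) {1..i}) {1..i} ?B"
        by (rule bij_betw_cong[THEN iffD1, rotated]) auto
      moreover have "restrict (\<rho> \<circ> \<sigma>) {1..i} \<in> {1..i} \<rightarrow>\<^sub>E ?B"
        using s b1 by (auto simp: Ps_def bij_betw_def)
      ultimately show "restrict (\<rho> \<circ> \<sigma>) {1..i} \<in> taus i A x T"
        using s i1 by (auto simp: taus_def Ps_def \<rho>_def)
    qed
    show "(\<lambda>\<tau>. restrict (\<rho>' \<circ> \<tau>) {1..i}) ` taus i A x T \<subseteq> Ps i A x"
    proof safe
      fix \<tau> assume s: "\<tau> \<in> taus i A x T"
      have cb: "bij_betw (\<rho>' \<circ> \<tau>) {1..i} A"
        using s b2 by (auto simp: taus_def intro: bij_betw_trans)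
      then have "bij_betw (restrict (\<rho>' \<circ> \<tau>) {1..i}) {1..i} A"
        by (rule bij_betw_cong[THEN iffD1, rotated]) auto
      moreover have "restrict (\<rho>' \<circ> \<tau>) {1..i} \<in> {1..i} \<rightarrow>\<^sub>E A"
        using cb[THEN bij_betw_imp_funcset] by (auto simp: Pi_def)
      moreover have "\<tau> (i-1) = Inr T \<or> \<tau> i = Inr T" using s by (auto simp: taus_def)
      moreover have "\<tau> (i-1) \<in> ?B" "\<tau> i \<in> ?B" using s i1 by (auto simp: taus_def PiE_def Pi_def)
      ultimately show "restrict (\<rho>' \<circ> \<tau>) {1..i} \<in> Ps i A x"
        using i1 by (auto simp: Ps_def \<rho>'_def)
    qed
  qed
  have "phi_tilde k i A x T sig = (\<Sum>\<tau>\<in>taus i A x T. \<Prod>s\<in>{1..i}. chisum (fsym k (\<tau> s)) (sig s))"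
    by (simp add: phi_tilde_def)
  also have "\<dots> = (\<Sum>\<sigma>\<in>Ps i A x. \<Prod>s\<in>{1..i}. chisum (fsym k (restrict (\<rho> \<circ> \<sigma>) {1..i} s)) (sig s))"
    by (rule sum.reindex_bij_betw[OF bij, symmetric])
  also have "\<dots> = (\<Sum>\<sigma>\<in>Ps i A x. \<Prod>s\<in>{1..i}. chisum (if \<sigma> s = x then T else block k (\<sigma> s)) (sig s))"
    by (intro sum.cong prod.cong refl) (auto simp: fsym_def \<rho>_def)
  finally show ?thesis .
qed


lemma Ps_pos:
  assumes "\<sigma> \<in> Ps i A x" "x \<in> A"
  obtains p where "p \<in> {1..i}" "\<And>s. s \<in> {1..i} \<Longrightarrow> \<sigma> s = x \<longleftrightarrow> s = p"
proof -
  have b: "bij_betw \<sigma> {1..i} A" using assms by (auto simp: Ps_def)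
  then have "x \<in> \<sigma> ` {1..i}" using assms(2) by (simp add: bij_betw_def)
  then obtain p where p: "p \<in> {1..i}" "\<sigma> p = x" by blast
  have inj: "inj_on \<sigma> {1..i}" using b by (simp add: bij_betw_def)
  have "\<sigma> s = x \<longleftrightarrow> s = p" if "s \<in> {1..i}" for s
    using inj_onD[OF inj, of s p] p that by auto
  with p that show ?thesis by blast
qed

lemma split_prod:
  fixes i p :: nat and \<sigma> :: "nat \<Rightarrow> nat"
  assumes "p \<in> {1..i}" "\<And>s. s \<in> {1..i} \<Longrightarrow> \<sigma> s = x \<longleftrightarrow> s = p"
  shows "(\<Prod>s\<in>{1..i}. chisum (if \<sigma> s = x then Y else block k (\<sigma> s)) (sig s))
       = chisum Y (sig p) * (\<Prod>s\<in>{1..i}-{p}. chisum (block k (\<sigma> s)) (sig s))"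
proof -
  have "(\<Prod>s\<in>{1..i}. chisum (if \<sigma> s = x then Y else block k (\<sigma> s)) (sig s))
     = chisum (if \<sigma> p = x then Y else block k (\<sigma> p)) (sig p) *
       (\<Prod>s\<in>{1..i}-{p}. chisum (if \<sigma> s = x then Y else block k (\<sigma> s)) (sig s))"
    using assms(1) by (intro prod.remove) auto
  also have "\<dots> = chisum Y (sig p) * (\<Prod>s\<in>{1..i}-{p}. chisum (block k (\<sigma> s)) (sig s))"
  proof -
    have px: "\<sigma> p = x" using assms(2)[OF assms(1)] by simp
    have "s \<in> {1..i}-{p} \<Longrightarrow> \<sigma> s \<noteq> x" for s using assms(2)[of s] by simp
    then have "(\<Prod>s\<in>{1..i}-{p}. chisum (if \<sigma> s = x then Y else block k (\<sigma> s)) (sig s))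
       = (\<Prod>s\<in>{1..i}-{p}. chisum (block k (\<sigma> s)) (sig s))"
      by (intro prod.cong refl) (simp only: if_False)
    then show ?thesis using px by (simp only: if_True simp_thms)
  qed
  finally show ?thesis .
qed

lemma chisum_single: "chisum {t} v = v t" by (simp add: chisum_def)

lemma finite_Ps: "finite (Ps i A x)" if "finite A"
  by (rule finite_subset[of _ "{1..i} \<rightarrow>\<^sub>E A"]) (auto simp: Ps_def intro: finite_PiE that)

lemma lin:
  assumes "x \<in> A" "i \<ge> 2" "finite T" "finite A"
  shows "phi_tilde k i A x T sig = (\<Sum>t\<in>T. phi_tilde k i A x {t} sig)"
proof -
  have "(\<Sum>t\<in>T. phi_tilde k i A x {t} sig) =
     (\<Sum>t\<in>T. \<Sum>\<sigma>\<in>Ps i A x. \<Prod>s\<in>{1..i}. chisum (if \<sigma> s = x then {t} else block k (\<sigma> s)) (sig s))"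
    using assms by (simp add: rep)
  also have "\<dots> = (\<Sum>\<sigma>\<in>Ps i A x. \<Sum>t\<in>T. \<Prod>s\<in>{1..i}. chisum (if \<sigma> s = x then {t} else block k (\<sigma> s)) (sig s))"
    by (rule sum.swap)
  also have "\<dots> = (\<Sum>\<sigma>\<in>Ps i A x. \<Prod>s\<in>{1..i}. chisum (if \<sigma> s = x then T else block k (\<sigma> s)) (sig s))"
  proof (rule sum.cong[OF refl])
    fix \<sigma> assume "\<sigma> \<in> Ps i A x"
    then obtain p where p: "p \<in> {1..i}" "\<And>s. s \<in> {1..i} \<Longrightarrow> \<sigma> s = x \<longleftrightarrow> s = p"
      using Ps_pos assms(1) by blast
    have "(\<Sum>t\<in>T. \<Prod>s\<in>{1..i}. chisum (if \<sigma> s = x then {t} else block k (\<sigma> s)) (sig s))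
       = (\<Sum>t\<in>T. chisum {t} (sig p) * (\<Prod>s\<in>{1..i}-{p}. chisum (block k (\<sigma> s)) (sig s)))"
      by (intro sum.cong refl split_prod[OF p])
    also have "\<dots> = chisum T (sig p) * (\<Prod>s\<in>{1..i}-{p}. chisum (block k (\<sigma> s)) (sig s))"
      by (simp only: chisum_single sum_distrib_right[symmetric]) (simp only: chisum_def)
    also have "\<dots> = (\<Prod>s\<in>{1..i}. chisum (if \<sigma> s = x then T else block k (\<sigma> s)) (sig s))"
      by (rule split_prod[OF p, symmetric])
    finally show "(\<Sum>t\<in>T. \<Prod>s\<in>{1..i}. chisum (if \<sigma> s = x then {t} else block k (\<sigma> s)) (sig s))
       = (\<Prod>s\<in>{1..i}. chisum (if \<sigma> s = x then T else block k (\<sigma> s)) (sig s))" .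
  qed
  also have "\<dots> = phi_tilde k i A x T sig"
    using assms by (simp add: rep)
  finally show ?thesis by simp
qed

lemma bit_add_self: "(c::bit) + c = 0" by (cases c) simp_all

lemma rel:
  assumes "finite A" "i \<ge> 2"
  shows "(\<Sum>x\<in>A. phi_tilde k i A x (block k x) sig) = 0"
proof -
  define P where "P = {\<sigma>. \<sigma> \<in> {1..i} \<rightarrow>\<^sub>E A \<and> bij_betw \<sigma> {1..i} A}"
  define H where "H = (\<lambda>\<sigma>. \<Prod>s\<in>{1..i}. chisum (block k (\<sigma> s)) (sig s))"
  have fP: "finite P"
    by (rule finite_subset[of _ "{1..i} \<rightarrow>\<^sub>E A"]) (auto simp: P_def intro: finite_PiE assms)
  have "(\<Sum>x\<in>A. phi_tilde k i A x (block k x) sig) = (\<Sum>x\<in>A. \<Sum>\<sigma>\<in>Ps i A x. H \<sigma>)"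
    using assms by (intro sum.cong refl) (auto simp: rep H_def intro!: sum.cong prod.cong)
  also have "\<dots> = (\<Sum>x\<in>A. \<Sum>\<sigma>\<in>P. if \<sigma> (i-1) = x \<or> \<sigma> i = x then H \<sigma> else 0)"
  proof (rule sum.cong[OF refl])
    fix x assume "x \<in> A"
    have "Ps i A x = {\<sigma>\<in>P. \<sigma> (i-1) = x \<or> \<sigma> i = x}" by (auto simp: Ps_def P_def)
    then show "sum H (Ps i A x) = (\<Sum>\<sigma>\<in>P. if \<sigma> (i-1) = x \<or> \<sigma> i = x then H \<sigma> else 0)"
      using fP by (simp only: sum.inter_filter)
  qed
  also have "\<dots> = (\<Sum>\<sigma>\<in>P. \<Sum>x\<in>A. if \<sigma> (i-1) = x \<or> \<sigma> i = x then H \<sigma> else 0)"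
    by (rule sum.swap)
  also have "\<dots> = (\<Sum>\<sigma>\<in>P. 0)"
  proof (rule sum.cong[OF refl])
    fix \<sigma> assume s: "\<sigma> \<in> P"
    have i1: "i - 1 \<in> {1..i}" "i \<in> {1..i}" "i - 1 \<noteq> i" using assms by auto
    have bs: "bij_betw \<sigma> {1..i} A" using s by (simp add: P_def)
    have ne: "\<sigma> (i-1) \<noteq> \<sigma> i"
      using bs i1 unfolding bij_betw_def inj_on_def by blast
    have inA: "\<sigma> (i-1) \<in> A" "\<sigma> i \<in> A"
      using bs i1 by (auto intro: bij_betw_apply)
    have "(\<Sum>x\<in>A. if \<sigma> (i-1) = x \<or> \<sigma> i = x then H \<sigma> else 0) = (\<Sum>x\<in>{x\<in>A. \<sigma> (i-1) = x \<or> \<sigma> i = x}. H \<sigma>)"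
      by (rule sum.inter_filter[OF assms(1), symmetric])
    also have "{x\<in>A. \<sigma> (i-1) = x \<or> \<sigma> i = x} = {\<sigma> (i-1), \<sigma> i}" using inA by auto
    also have "(\<Sum>x\<in>{\<sigma> (i-1), \<sigma> i}. H \<sigma>) = H \<sigma> + H \<sigma>" using ne by (simp only: sum.insert finite.emptyI finite_insert sum.empty insert_iff empty_iff simp_thms add_0_right)
    also have "H \<sigma> + H \<sigma> = 0" by (rule bit_add_self)
    finally show "(\<Sum>x\<in>A. if \<sigma> (i-1) = x \<or> \<sigma> i = x then H \<sigma> else 0) = 0" .
  qed
  finally show ?thesis by (simp only: sum.neutral_const)
qed


definition lo :: "(nat \<Rightarrow> nat) \<Rightarrow> nat \<Rightarrow> nat" where
  "lo k h = (\<Sum>j\<in>{1..<h}. k j) + 1"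

lemma block_disj:
  assumes "t \<in> block k h" "t \<in> block k h'"
  shows "h = h'"
proof (rule ccontr)
  assume ne: "h \<noteq> h'"
  have *: "\<not> (t \<in> block k a \<and> t \<in> block k b)" if "a < b" for a b
  proof -
    have "(\<Sum>j\<in>{1..a}. k j) \<le> (\<Sum>j\<in>{1..<b}. k j)"
      using that by (intro sum_mono2) auto
    then show ?thesis by (auto simp: block_def)
  qed
  show False using ne *[of h h'] *[of h' h] assms by (cases "h < h'") auto
qed

lemma card_block: "h \<ge> 1 \<Longrightarrow> card (block k h) = k h"
proof -
  assume "h \<ge> 1"
  then have "{1..h} = insert h {1..<h}" by auto
  then have "(\<Sum>j\<in>{1..h}. k j) = k h + (\<Sum>j\<in>{1..<h}. k j)" by simp
  then show ?thesis by (simp add: block_def)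
qed

lemma finite_block: "finite (block k h)" by (simp add: block_def)

lemma lo_block: "k h \<ge> 1 \<Longrightarrow> h \<ge> 1 \<Longrightarrow> lo k h \<in> block k h"
proof -
  assume "k h \<ge> 1" "h \<ge> 1"
  then have "{1..h} = insert h {1..<h}" by auto
  then have "(\<Sum>j\<in>{1..h}. k j) = k h + (\<Sum>j\<in>{1..<h}. k j)" by simp
  then show ?thesis using \<open>k h \<ge> 1\<close> by (simp add: block_def lo_def)
qed

definition ev :: "(nat \<Rightarrow> nat) \<Rightarrow> nat \<Rightarrow> nat \<Rightarrow> bit" where
  "ev y = (\<lambda>s z. if z = y s then 1 else 0)"

lemma chisum_ev: "finite Y \<Longrightarrow> chisum Y (ev y s) = (if y s \<in> Y then 1 else 0)"
  by (simp add: chisum_def ev_def)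

lemma prod_ind: "finite S \<Longrightarrow> (\<Prod>s\<in>S. if P s then (1::bit) else 0) = (if \<forall>s\<in>S. P s then 1 else 0)"
  by (induction S rule: finite_induct) auto

lemma eval:
  fixes \<sigma>0 y :: "nat \<Rightarrow> nat"
  assumes "x \<in> A" "i \<ge> 2" "finite A" "bij_betw \<sigma>0 {1..i} A0"
    and ys: "\<And>s. s \<in> {1..i} \<Longrightarrow> y s \<in> block k (\<sigma>0 s)" and tx: "t \<in> block k x"
  shows "phi_tilde k i A x {t} (ev y) =
    (if A = A0 \<and> (\<sigma>0 (i-1) = x \<or> \<sigma>0 i = x) \<and> (\<forall>s\<in>{1..i}. \<sigma>0 s = x \<longrightarrow> y s = t) then 1 else 0)"
proof -
  define F where "F = (\<lambda>(\<sigma>::nat\<Rightarrow>nat) (s::nat). if \<sigma> s = x then {t} else block k (\<sigma> s))"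
  define Q where "Q = (\<lambda>\<sigma>. \<forall>s\<in>{1..i}. y s \<in> F \<sigma> s)"
  define \<sigma>1 where "\<sigma>1 = restrict \<sigma>0 {1..i}"
  have fF: "finite (F \<sigma> s)" for \<sigma> s by (simp add: F_def finite_block)
  have "phi_tilde k i A x {t} (ev y) = (\<Sum>\<sigma>\<in>Ps i A x. \<Prod>s\<in>{1..i}. chisum (F \<sigma> s) (ev y s))"
    using assms by (simp add: rep F_def)
  also have "\<dots> = (\<Sum>\<sigma>\<in>Ps i A x. if Q \<sigma> then 1 else 0)"
    by (simp only: chisum_ev[OF fF] prod_ind[OF finite_atLeastAtMost] Q_def)
  also have "\<dots> = (\<Sum>\<sigma>\<in>{\<sigma>\<in>Ps i A x. Q \<sigma>}. 1)"
    by (rule sum.inter_filter[OF finite_Ps[OF assms(3)], symmetric])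
  also have "{\<sigma>\<in>Ps i A x. Q \<sigma>} = (if \<sigma>1 \<in> Ps i A x \<and> Q \<sigma>1 then {\<sigma>1} else {})"
  proof -
    have "\<sigma> = \<sigma>1" if "\<sigma> \<in> Ps i A x" "Q \<sigma>" for \<sigma>
    proof
      fix s show "\<sigma> s = \<sigma>1 s"
      proof (cases "s \<in> {1..i}")
        case True
        have "y s \<in> F \<sigma> s" using that(2) True unfolding Q_def by blast
        then have "y s \<in> block k (\<sigma> s)"
          using tx unfolding F_def by (cases "\<sigma> s = x") auto
        then have "\<sigma> s = \<sigma>0 s" using ys[OF True] block_disj by blast
        then show ?thesis using True by (simp add: \<sigma>1_def)
      next
        case False
        then show ?thesis using that(1) by (auto simp: Ps_def \<sigma>1_def PiE_def extensional_def)
      qed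
    qed
    then show ?thesis by auto
  qed
  also have "(\<Sum>\<sigma>\<in>(if \<sigma>1 \<in> Ps i A x \<and> Q \<sigma>1 then {\<sigma>1} else {}). (1::bit))
      = (if \<sigma>1 \<in> Ps i A x \<and> Q \<sigma>1 then 1 else 0)" by simp
  also have "(\<sigma>1 \<in> Ps i A x \<and> Q \<sigma>1) \<longleftrightarrow>
      (A = A0 \<and> (\<sigma>0 (i-1) = x \<or> \<sigma>0 i = x) \<and> (\<forall>s\<in>{1..i}. \<sigma>0 s = x \<longrightarrow> y s = t))"
  proof -
    have i1: "i - 1 \<in> {1..i}" "i \<in> {1..i}" using assms by auto
    have b1: "bij_betw \<sigma>1 {1..i} A \<longleftrightarrow> bij_betw \<sigma>0 {1..i} A"
      by (rule bij_betw_cong) (simp add: \<sigma>1_def)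
    have im: "\<sigma>0 ` {1..i} = A0" using assms(4) by (simp add: bij_betw_def)
    have "bij_betw \<sigma>0 {1..i} A \<longleftrightarrow> A = A0"
      using assms(4) im by (auto simp: bij_betw_def)
    moreover have "bij_betw \<sigma>0 {1..i} A \<Longrightarrow> \<sigma>1 \<in> {1..i} \<rightarrow>\<^sub>E A"
      by (auto simp: \<sigma>1_def bij_betw_def)
    moreover have "Q \<sigma>1 \<longleftrightarrow> (\<forall>s\<in>{1..i}. \<sigma>0 s = x \<longrightarrow> y s = t)"
      using ys by (auto simp: Q_def F_def \<sigma>1_def)
    ultimately show ?thesis using i1 b1 by (auto simp: Ps_def \<sigma>1_def)
  qed
  finally show ?thesis .
qed


definition Sub :: "nat \<Rightarrow> nat \<Rightarrow> nat set set" where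
  "Sub n i = {A. A \<subseteq> {1..n} \<and> card A = i}"
definition piv :: "(nat \<Rightarrow> nat) \<Rightarrow> nat set \<Rightarrow> nat \<times> nat" where
  "piv k A = (Min A, lo k (Min A))"
definition JJ :: "(nat \<Rightarrow> nat) \<Rightarrow> nat \<Rightarrow> nat \<Rightarrow> (nat set \<times> nat \<times> nat) set" where
  "JJ k n i = Sigma (Sub n i) (\<lambda>A. Sigma A (block k) - {piv k A})"
definition gg :: "(nat \<Rightarrow> nat) \<Rightarrow> nat \<Rightarrow> nat set \<times> nat \<times> nat \<Rightarrow> mlmap" where
  "gg k i q = phi_tilde k i (fst q) (fst (snd q)) {snd (snd q)}"

lemma finite_Sub: "finite (Sub n i)"
  by (rule finite_subset[of _ "Pow {1..n}"]) (auto simp: Sub_def)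

lemma finite_JJ: "finite (JJ k n i)"
  unfolding JJ_def using finite_Sub
  by (intro finite_SigmaI finite_Diff) (auto simp: Sub_def finite_block intro: finite_subset)

lemma piv_in:
  assumes kpos: "\<forall>h\<in>{1..n}. k h \<ge> 1" and "i \<ge> 2" "A \<in> Sub n i"
  shows "piv k A \<in> Sigma A (block k)" "fst (piv k A) \<in> A"
proof -
  have fA: "finite A" "A \<noteq> {}" "A \<subseteq> {1..n}" using assms(2,3) by (auto simp: Sub_def intro: finite_subset)
  then have m: "Min A \<in> A" by simp
  then have "Min A \<in> {1..n}" by (rule subsetD[OF fA(3)])
  then have "lo k (Min A) \<in> block k (Min A)" using kpos by (intro lo_block) auto
  then show "piv k A \<in> Sigma A (block k)" "fst (piv k A) \<in> A" using m by (auto simp: piv_def)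
qed

lemma pair_eval:
  assumes kpos: "\<forall>h\<in>{1..n}. k h \<ge> 1" and i2: "i \<ge> 2" and A0: "A0 \<in> Sub n i"
    and xu: "xu \<in> A0" and xv: "xv \<in> A0" and ne: "xu \<noteq> xv"
    and u: "u \<in> block k xu" and v: "v \<in> block k xv"
  obtains y where "\<And>q. q \<in> JJ k n i \<Longrightarrow> gg k i q (ev y) = (if q = (A0,xu,u) \<or> q = (A0,xv,v) then 1 else 0)"
proof -
  have fA0: "finite A0" "card A0 = i" "A0 \<subseteq> {1..n}" using A0 by (auto simp: Sub_def intro: finite_subset)
  define M where "M = A0 - {xu, xv}"
  have cM: "card M = i - 2" using fA0 xu xv ne by (simp add: M_def card_Diff_subset)
  obtain \<beta> where \<beta>: "bij_betw \<beta> {1..card M} M"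
    using ex_bij_betw_nat_finite_1[of M] fA0 by (auto simp: M_def)
  define \<sigma>0 where "\<sigma>0 = (\<lambda>s. if s = i - 1 then xu else if s = i then xv else \<beta> s)"
  define y where "y = (\<lambda>s. if s = i - 1 then u else if s = i then v else lo k (\<sigma>0 s))"
  have im: "\<sigma>0 ` {1..i} = A0"
  proof
    show "\<sigma>0 ` {1..i} \<subseteq> A0"
    proof
      fix h assume "h \<in> \<sigma>0 ` {1..i}"
      then obtain s where s: "s \<in> {1..i}" "h = \<sigma>0 s" by blast
      show "h \<in> A0"
      proof (cases "s = i - 1 \<or> s = i")
        case True then show ?thesis using s xu xv by (auto simp: \<sigma>0_def)
      next
        case False
        then have "s \<in> {1..card M}" using s cM by auto
        then have "\<beta> s \<in> M" by (rule bij_betw_apply[OF \<beta>])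
        then show ?thesis using s(2) False by (simp add: \<sigma>0_def M_def)
      qed
    qed
    show "A0 \<subseteq> \<sigma>0 ` {1..i}"
    proof
      fix h assume h: "h \<in> A0"
      show "h \<in> \<sigma>0 ` {1..i}"
      proof (cases "h = xu \<or> h = xv")
        case True
        have "\<sigma>0 (i-1) = xu" "\<sigma>0 i = xv" "i - 1 \<in> {1..i}" "i \<in> {1..i}" using i2 by (auto simp: \<sigma>0_def)
        then show ?thesis using True by (metis image_eqI)
      next
        case False
        then have "h \<in> M" using h by (auto simp: M_def)
        then have "h \<in> \<beta> ` {1..card M}" using \<beta> by (simp add: bij_betw_def)
        then obtain s where s: "s \<in> {1..card M}" "\<beta> s = h" by (auto simp del: atLeastAtMost_iff)
        then have "s \<noteq> i - 1" "s \<noteq> i" "s \<in> {1..i}" using cM i2 by auto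
        then have "\<sigma>0 s = h" using s by (simp add: \<sigma>0_def)
        then show ?thesis using \<open>s \<in> {1..i}\<close> by blast
      qed
    qed
  qed
  have inj: "inj_on \<sigma>0 {1..i}"
    by (rule eq_card_imp_inj_on) (use im fA0 in auto)
  have bij: "bij_betw \<sigma>0 {1..i} A0" using inj im by (simp add: bij_betw_def)
  have s1: "\<sigma>0 (i-1) = xu" "\<sigma>0 i = xv" "y (i-1) = u" "y i = v" "i - 1 \<noteq> i"
    using i2 by (auto simp: \<sigma>0_def y_def)
  have i1: "i - 1 \<in> {1..i}" "i \<in> {1..i}" using i2 by auto
  have ys: "y s \<in> block k (\<sigma>0 s)" if s: "s \<in> {1..i}" for s
  proof (cases "s = i - 1 \<or> s = i")
    case True then show ?thesis using s1 u v by auto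
  next
    case False
    have "\<sigma>0 s \<in> A0" using im s by blast
    then have "\<sigma>0 s \<in> {1..n}" using fA0 by auto
    then have "lo k (\<sigma>0 s) \<in> block k (\<sigma>0 s)" using kpos by (intro lo_block) auto
    then show ?thesis using False by (simp add: y_def)
  qed
  have "gg k i q (ev y) = (if q = (A0,xu,u) \<or> q = (A0,xv,v) then 1 else 0)" if q: "q \<in> JJ k n i" for q
  proof -
    obtain A x t where qd: "q = (A, x, t)" by (cases q) auto
    have A: "A \<in> Sub n i" "x \<in> A" "t \<in> block k x" using q by (auto simp: JJ_def qd)
    have fA: "finite A" using A by (auto simp: Sub_def intro: finite_subset)
    have "gg k i q (ev y) = (if A = A0 \<and> (\<sigma>0 (i-1) = x \<or> \<sigma>0 i = x) \<and> (\<forall>s\<in>{1..i}. \<sigma>0 s = x \<longrightarrow> y s = t) then 1 else 0)"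
      unfolding gg_def qd fst_conv snd_conv
      by (rule eval[OF A(2) i2 fA bij ys A(3)])
    also have "(A = A0 \<and> (\<sigma>0 (i-1) = x \<or> \<sigma>0 i = x) \<and> (\<forall>s\<in>{1..i}. \<sigma>0 s = x \<longrightarrow> y s = t))
        \<longleftrightarrow> (q = (A0,xu,u) \<or> q = (A0,xv,v))"
    proof
      assume c: "A = A0 \<and> (\<sigma>0 (i-1) = x \<or> \<sigma>0 i = x) \<and> (\<forall>s\<in>{1..i}. \<sigma>0 s = x \<longrightarrow> y s = t)"
      then show "q = (A0,xu,u) \<or> q = (A0,xv,v)"
        using i1 s1 by (auto simp: qd)
    next
      assume c: "q = (A0,xu,u) \<or> q = (A0,xv,v)"
      have "\<forall>s\<in>{1..i}. \<sigma>0 s = x \<longrightarrow> y s = t"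
      proof (intro ballI impI)
        fix s assume s: "s \<in> {1..i}" "\<sigma>0 s = x"
        show "y s = t"
        proof (cases "x = xu")
          case True
          then have "s = i - 1" using inj_onD[OF inj, of s "i-1"] s i1 s1 by auto
          then show ?thesis using c True ne s1 by (auto simp: qd)
        next
          case False
          then have "x = xv" using c by (auto simp: qd)
          then have "s = i" using inj_onD[OF inj, of s "i"] s i1 s1 by auto
          then show ?thesis using c False s1 by (auto simp: qd)
        qed
      qed
      then show "A = A0 \<and> (\<sigma>0 (i-1) = x \<or> \<sigma>0 i = x) \<and> (\<forall>s\<in>{1..i}. \<sigma>0 s = x \<longrightarrow> y s = t)"
        using c s1 by (auto simp: qd)
    qed
    finally show ?thesis .
  qed
  then show ?thesis using that by blast
qed

lemma sum2:
  assumes "finite S" "qa \<noteq> qb"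
  shows "(\<Sum>q\<in>S. c q * (if q = qa \<or> q = qb then 1 else (0::bit)))
     = (if qa \<in> S then c qa else 0) + (if qb \<in> S then c qb else 0)"
proof -
  have "(\<Sum>q\<in>S. c q * (if q = qa \<or> q = qb then 1 else (0::bit)))
     = (\<Sum>q\<in>S. (if q = qa then c q else 0) + (if q = qb then c q else 0))"
    using assms(2) by (intro sum.cong) auto
  also have "\<dots> = (if qa \<in> S then c qa else 0) + (if qb \<in> S then c qb else 0)"
    by (simp only: sum.distrib sum.delta[OF assms(1)])
  finally show ?thesis .
qed


lemma core:
  assumes kpos: "\<forall>h\<in>{1..n}. k h \<ge> 1" and i2: "i \<ge> 2"
    and H: "\<And>sig. (\<Sum>q\<in>JJ k n i. c q * gg k i q sig) = 0"
    and q: "q \<in> JJ k n i"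
  shows "c q = 0"
proof -
  have pairA: "(if (A0,xu,u) \<in> JJ k n i then c (A0,xu,u) else 0)
      + (if (A0,xv,v) \<in> JJ k n i then c (A0,xv,v) else 0) = 0"
    if A0: "A0 \<in> Sub n i" and xu: "xu \<in> A0" and xv: "xv \<in> A0" and ne: "xu \<noteq> xv"
      and u: "u \<in> block k xu" and v: "v \<in> block k xv" for A0 xu xv u v
  proof -
    obtain y where y: "\<And>q. q \<in> JJ k n i \<Longrightarrow> gg k i q (ev y) = (if q = (A0,xu,u) \<or> q = (A0,xv,v) then 1 else 0)"
      using pair_eval[OF kpos i2 A0 xu xv ne u v] by blast
    have "0 = (\<Sum>q\<in>JJ k n i. c q * gg k i q (ev y))" using H by simp
    also have "\<dots> = (\<Sum>q\<in>JJ k n i. c q * (if q = (A0,xu,u) \<or> q = (A0,xv,v) then 1 else 0))"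
      by (intro sum.cong refl) (simp only: y)
    also have "\<dots> = (if (A0,xu,u) \<in> JJ k n i then c (A0,xu,u) else 0)
      + (if (A0,xv,v) \<in> JJ k n i then c (A0,xv,v) else 0)"
      by (rule sum2[OF finite_JJ]) (use ne in simp)
    finally show ?thesis by simp
  qed
  have step1: "c (A0,x,t) = 0" if qq: "(A0,x,t) \<in> JJ k n i" and nx: "x \<noteq> fst (piv k A0)" for A0 x t
  proof -
    have A: "A0 \<in> Sub n i" "x \<in> A0" "t \<in> block k x" using qq by (auto simp: JJ_def)
    obtain x0 t0 where p: "piv k A0 = (x0, t0)" by (cases "piv k A0") auto
    have p2: "x0 \<in> A0" "t0 \<in> block k x0" using piv_in[OF kpos i2 A(1)] p by auto
    have nj: "(A0, x0, t0) \<notin> JJ k n i" using p by (auto simp: JJ_def)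
    have "x \<noteq> x0" using nx p by simp
    from pairA[OF A(1) A(2) p2(1) this A(3) p2(2)] qq nj show ?thesis by simp
  qed
  obtain A0 x t where qd: "q = (A0, x, t)" by (cases q) auto
  show ?thesis
  proof (cases "x = fst (piv k A0)")
    case False then show ?thesis using step1 q qd by simp
  next
    case True
    have A: "A0 \<in> Sub n i" "x \<in> A0" "t \<in> block k x" using q qd by (auto simp: JJ_def)
    have fA: "finite A0" "card A0 = i" "A0 \<subseteq> {1..n}" using A(1) by (auto simp: Sub_def intro: finite_subset)
    have "\<exists>x'\<in>A0. x' \<noteq> x"
    proof (rule ccontr)
      assume "\<not> (\<exists>x'\<in>A0. x' \<noteq> x)"
      then have "A0 \<subseteq> {x}" by auto
      then have "card A0 \<le> 1" using card_mono[of "{x}" A0] by simp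
      then show False using fA i2 by simp
    qed
    then obtain x' where x': "x' \<in> A0" "x' \<noteq> x" by blast
    have "x' \<in> {1..n}" using x' fA by auto
    then have v: "lo k x' \<in> block k x'" using kpos by (intro lo_block) auto
    have "(x', lo k x') \<noteq> piv k A0" using x' True by (metis fst_conv)
    then have inJ: "(A0, x', lo k x') \<in> JJ k n i" using A x' v by (auto simp: JJ_def)
    have c0: "c (A0, x', lo k x') = 0" using step1[OF inJ] x' True by simp
    from pairA[OF A(1) A(2) x'(1) x'(2)[symmetric] A(3) v] q qd inJ c0 show ?thesis by simp
  qed
qed

lemma bit_eq_of_add: "(a::bit) + b = 0 \<Longrightarrow> a = b"
  by (cases a; cases b) auto

lemma gen_in_span:
  assumes kpos: "\<forall>h\<in>{1..n}. k h \<ge> 1" and i2: "i \<ge> 2"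
    and A: "A \<in> Sub n i" "x \<in> A" "T \<subseteq> block k x"
  shows "phi_tilde k i A x T \<in> VS.span (gg k i ` JJ k n i)"
proof -
  have fA: "finite A" using A(1) by (auto simp: Sub_def intro: finite_subset)
  have single: "phi_tilde k i A x' {t} \<in> VS.span (gg k i ` JJ k n i)" if t: "x' \<in> A" "t \<in> block k x'" for x' t
  proof (cases "(x', t) = piv k A")
    case False
    then have "(A, x', t) \<in> JJ k n i" using A t by (auto simp: JJ_def)
    then have "gg k i (A, x', t) \<in> gg k i ` JJ k n i" by blast
    then show ?thesis by (intro VS.span_base) (simp add: gg_def)
  next
    case True
    let ?S = "Sigma A (block k)"
    have fS: "finite ?S" using fA by (auto simp: finite_block)
    have pS: "piv k A \<in> ?S" using piv_in[OF kpos i2 A(1)] by simp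
    have eq: "phi_tilde k i A x' {t} = (\<Sum>q\<in>?S - {piv k A}. phi_tilde k i A (fst q) {snd q})"
    proof
      fix sig
      define F2 where "F2 = (\<lambda>y t. phi_tilde k i A y {t} sig)"
      define F where "F = (\<lambda>q. case q of (y, t) \<Rightarrow> F2 y t)"
      have "(\<Sum>y\<in>A. \<Sum>t\<in>block k y. F2 y t) = (\<Sum>q\<in>?S. F q)"
        unfolding F_def by (rule sum.Sigma[OF fA]) (simp add: finite_block)
      moreover have "(\<Sum>y\<in>A. \<Sum>t\<in>block k y. F2 y t) = (\<Sum>y\<in>A. phi_tilde k i A y (block k y) sig)"
      proof (rule sum.cong[OF refl])
        fix y assume yA: "y \<in> A"
        show "(\<Sum>t\<in>block k y. F2 y t) = phi_tilde k i A y (block k y) sig"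
          unfolding F2_def by (rule lin[OF yA i2 finite_block fA, symmetric])
      qed
      moreover have "(\<Sum>y\<in>A. phi_tilde k i A y (block k y) sig) = 0" by (rule rel[OF fA i2])
      ultimately have "(\<Sum>q\<in>?S. F q) = 0" by simp
      then have "F (piv k A) + (\<Sum>q\<in>?S - {piv k A}. F q) = 0"
        using sum.remove[OF fS pS, of F] by simp
      then have "F (piv k A) = (\<Sum>q\<in>?S - {piv k A}. F q)" by (rule bit_eq_of_add)
      moreover have "F q = phi_tilde k i A (fst q) {snd q} sig" for q
        by (cases q) (simp add: F_def F2_def)
      ultimately show "phi_tilde k i A x' {t} sig = (\<Sum>q\<in>?S - {piv k A}. phi_tilde k i A (fst q) {snd q}) sig"
        using True[symmetric] by (simp add: F_def F2_def sum_fun_apply')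
    qed
    show ?thesis unfolding eq
    proof (rule VS.span_sum)
      fix q assume q: "q \<in> ?S - {piv k A}"
      then have "(A, q) \<in> JJ k n i" using A by (auto simp: JJ_def)
      then have "gg k i (A, q) \<in> gg k i ` JJ k n i" by blast
      then show "phi_tilde k i A (fst q) {snd q} \<in> VS.span (gg k i ` JJ k n i)"
        by (intro VS.span_base) (simp add: gg_def)
    qed
  qed
  have fT: "finite T" using A(3) finite_block finite_subset by blast
  have "phi_tilde k i A x T = (\<Sum>t\<in>T. phi_tilde k i A x {t})"
    by (rule ext) (simp add: sum_fun_apply' lin[OF A(2) i2 fT fA])
  also have "\<dots> \<in> VS.span (gg k i ` JJ k n i)"
    using single A(2,3) by (intro VS.span_sum) auto
  finally show ?thesis .
qed



lemma card_Sub: "card (Sub n i) = n choose i"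
  using n_subsets[of "{1..n}" i] by (simp add: Sub_def)

lemma card_Sub_mem:
  assumes h: "h \<in> {1..n}" and i1: "i \<ge> 1"
  shows "card {A\<in>Sub n i. h \<in> A} = (n - 1) choose (i - 1)"
proof -
  have "bij_betw (\<lambda>A. A - {h}) {A\<in>Sub n i. h \<in> A} {B. B \<subseteq> {1..n} - {h} \<and> card B = i - 1}"
  proof (rule bij_betw_byWitness[where f'="insert h"])
    show "\<forall>a\<in>{A \<in> Sub n i. h \<in> A}. insert h (a - {h}) = a" by auto
    show "\<forall>a'\<in>{B. B \<subseteq> {1..n} - {h} \<and> card B = i - 1}. insert h a' - {h} = a'" by auto
    show "(\<lambda>A. A - {h}) ` {A \<in> Sub n i. h \<in> A} \<subseteq> {B. B \<subseteq> {1..n} - {h} \<and> card B = i - 1}"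
    proof safe
      fix A assume "A \<in> Sub n i" "h \<in> A"
      moreover then have "finite A" by (auto simp: Sub_def intro: finite_subset)
      ultimately show "card (A - {h}) = i - 1" by (simp add: Sub_def)
    qed (auto simp: Sub_def)
    show "insert h ` {B. B \<subseteq> {1..n} - {h} \<and> card B = i - 1} \<subseteq> {A \<in> Sub n i. h \<in> A}"
    proof safe
      fix B assume B: "B \<subseteq> {1..n} - {h}" "card B = i - 1"
      then have "finite B" "h \<notin> B" by (auto intro: finite_subset)
      then show "insert h B \<in> Sub n i" using B h i1 by (auto simp: Sub_def)
    qed
  qed
  then have "card {A\<in>Sub n i. h \<in> A} = card {B. B \<subseteq> {1..n} - {h} \<and> card B = i - 1}"
    by (rule bij_betw_same_card)
  also have "\<dots> = card ({1..n} - {h}) choose (i - 1)" by (rule n_subsets) simp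
  also have "card ({1..n} - {h}) = n - 1" using h by simp
  finally show ?thesis .
qed

lemma count:
  assumes kpos: "\<forall>h\<in>{1..n}. k h \<ge> 1" and i2: "i \<ge> 2"
  shows "int (\<Sum>A\<in>Sub n i. (\<Sum>x\<in>A. k x) - 1)
     = int (\<Sum>h\<in>{1..n}. k h) * int ((n - 1) choose (i - 1)) - int (n choose i)"
proof -
  have ge: "(\<Sum>x\<in>A. k x) \<ge> 1" if A: "A \<in> Sub n i" for A
  proof -
    have fA: "finite A" "A \<noteq> {}" "A \<subseteq> {1..n}" using A i2 by (auto simp: Sub_def intro: finite_subset)
    then obtain a where a: "a \<in> A" by blast
    have "k a \<le> (\<Sum>x\<in>A. k x)" using fA a by (intro member_le_sum) auto
    moreover have "k a \<ge> 1" using kpos a fA by auto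
    ultimately show ?thesis by simp
  qed
  have "int (\<Sum>A\<in>Sub n i. (\<Sum>x\<in>A. k x) - 1) = (\<Sum>A\<in>Sub n i. int (\<Sum>x\<in>A. k x) - 1)"
    using ge by (simp add: of_nat_diff)
  also have "\<dots> = int (\<Sum>A\<in>Sub n i. \<Sum>x\<in>A. k x) - int (card (Sub n i))"
    by (simp add: sum_subtractf)
  also have "(\<Sum>A\<in>Sub n i. \<Sum>x\<in>A. k x) = (\<Sum>A\<in>Sub n i. \<Sum>h\<in>{1..n}. if h \<in> A then k h else 0)"
  proof (rule sum.cong[OF refl])
    fix A assume "A \<in> Sub n i"
    then have "{1..n} \<inter> A = A" by (auto simp: Sub_def)
    then show "(\<Sum>x\<in>A. k x) = (\<Sum>h\<in>{1..n}. if h \<in> A then k h else 0)"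
      using sum.inter_restrict[of "{1..n}" k A] by simp
  qed
  also have "\<dots> = (\<Sum>h\<in>{1..n}. \<Sum>A\<in>Sub n i. if h \<in> A then k h else 0)" by (rule sum.swap)
  also have "\<dots> = (\<Sum>h\<in>{1..n}. k h * ((n - 1) choose (i - 1)))"
  proof (rule sum.cong[OF refl])
    fix h assume h: "h \<in> {1..n}"
    have "(\<Sum>A\<in>Sub n i. if h \<in> A then k h else 0) = (\<Sum>A\<in>{A\<in>Sub n i. h \<in> A}. k h)"
      by (rule sum.inter_filter[OF finite_Sub, symmetric])
    also have "\<dots> = k h * ((n - 1) choose (i - 1))"
      using card_Sub_mem[OF h, of i] i2 by simp
    finally show "(\<Sum>A\<in>Sub n i. if h \<in> A then k h else 0) = k h * ((n - 1) choose (i - 1))" .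
  qed
  also have "\<dots> = (\<Sum>h\<in>{1..n}. k h) * ((n - 1) choose (i - 1))" by (simp add: sum_distrib_right)
  finally show ?thesis by (simp add: card_Sub)
qed

lemma indep_lemma:
  fixes g :: "'q \<Rightarrow> mlmap"
  assumes fin: "finite J" and inj: "inj_on g J"
    and core: "\<And>c. (\<And>sig. (\<Sum>q\<in>J. c q * g q sig) = 0) \<Longrightarrow> \<forall>q\<in>J. c q = 0"
  shows "VS.independent (g ` J)"
  apply (rule VS.independent_if_scalars_zero)
   apply (rule finite_imageI[OF fin])
  subgoal premises P for f v
  proof -
    have H2: "(\<Sum>q\<in>J. mscale (f (g q)) (g q)) = 0"
      using P(1) by (simp only: sum.reindex[OF inj] o_def)
    have Hs: "(\<Sum>q\<in>J. f (g q) * g q sig) = 0" for sig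
    proof -
      have "(\<Sum>q\<in>J. mscale (f (g q)) (g q)) sig = 0" using H2 by (simp only: zero_fun_apply)
      then show ?thesis by (simp only: sum_fun_apply' mscale_def)
    qed
    have fz: "\<forall>q\<in>J. f (g q) = 0" by (rule core) (rule Hs)
    from P(2) obtain q where "q \<in> J" "v = g q" by blast
    then show "f v = 0" using fz by simp
  qed
  done

theorem proposition2p6:
  fixes n i :: nat and k :: "nat \<Rightarrow> nat"
  assumes "\<forall>h\<in>{1..n}. k h \<ge> 1"
    and "i \<ge> 2"
  shows "int (vector_space.dim mscale (Gov_tilde k n i))
         = int (\<Sum>h\<in>{1..n}. k h) * int ((n - 1) choose (i - 1)) - int (n choose i)"
proof -
  note kpos = assms(1) and i2 = assms(2)
  define G where "G = {phi_tilde k i A x T | A x T. A \<subseteq> {1..n} \<and> card A = i \<and> x \<in> A \<and> T \<subseteq> block k x}"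
  let ?J = "JJ k n i"
  let ?g = "gg k i"
  have Gov: "Gov_tilde k n i = VS.span G" unfolding Gov_tilde_def G_def by (rule refl)
  have spaneq: "VS.span (?g ` ?J) = VS.span G"
  proof (rule VS.span_eq[THEN iffD2], rule conjI)
    show "?g ` ?J \<subseteq> VS.span G"
    proof
      fix v assume "v \<in> ?g ` ?J"
      then obtain A x t where q: "(A, x, t) \<in> ?J" "v = ?g (A, x, t)" by auto
      then have "A \<subseteq> {1..n} \<and> card A = i \<and> x \<in> A \<and> {t} \<subseteq> block k x"
        by (auto simp: JJ_def Sub_def)
      then have "v \<in> G" using q by (auto simp: G_def gg_def)
      then show "v \<in> VS.span G" by (rule VS.span_base)
    qed
    show "G \<subseteq> VS.span (?g ` ?J)"
    proof
      fix v assume "v \<in> G"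
      then obtain A x T where "v = phi_tilde k i A x T" "A \<subseteq> {1..n}" "card A = i" "x \<in> A" "T \<subseteq> block k x"
        by (auto simp: G_def)
      then show "v \<in> VS.span (?g ` ?J)"
        using gen_in_span[OF kpos i2, of A x T] by (simp add: Sub_def)
    qed
  qed
  have coreJ: "c q = 0" if H: "\<And>sig. (\<Sum>q\<in>?J. c q * ?g q sig) = 0" and q: "q \<in> ?J" for c q
    using core[OF kpos i2 H q] .
  have inj: "inj_on ?g ?J"
  proof (rule inj_onI, rule ccontr)
    fix p q assume p: "p \<in> ?J" and q: "q \<in> ?J" and eq: "?g p = ?g q" and ne: "p \<noteq> q"
    define c where "c = (\<lambda>r. if r = p \<or> r = q then (1::bit) else 0)"
    have "(\<Sum>r\<in>?J. c r * ?g r sig) = 0" for sig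
    proof -
      have "(\<Sum>r\<in>?J. c r * ?g r sig) = (\<Sum>r\<in>?J. ?g r sig * (if r = p \<or> r = q then 1 else 0))"
        by (intro sum.cong refl) (simp only: c_def mult.commute)
      also have "\<dots> = ?g p sig + ?g q sig"
        using p q by (simp only: sum2[OF finite_JJ ne] if_True)
      also have "\<dots> = 0" unfolding eq by (rule bit_add_self)
      finally show ?thesis .
    qed
    then have "c p = 0" using coreJ p by blast
    then show False by (simp add: c_def)
  qed
  have indep: "VS.independent (?g ` ?J)"
    by (rule indep_lemma[OF finite_JJ inj]) (use coreJ in blast)
  have "vector_space.dim mscale (Gov_tilde k n i) = VS.dim (VS.span G)" unfolding Gov by (rule refl)
  also have "\<dots> = VS.dim G" by (rule VS.dim_span)
  also have "\<dots> = card (?g ` ?J)" using VS.dim_eq_card[OF spaneq indep] .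
  also have "\<dots> = card ?J" using card_image[OF inj] .
  also have "card ?J = (\<Sum>A\<in>Sub n i. (\<Sum>x\<in>A. k x) - 1)"
  proof -
    have "card ?J = (\<Sum>A\<in>Sub n i. card (Sigma A (block k) - {piv k A}))"
      unfolding JJ_def
    proof (rule card_SigmaI[OF finite_Sub], rule ballI)
      fix A assume "A \<in> Sub n i"
      then have "finite A" using finite_subset[of A "{1..n}"] by (simp add: Sub_def)
      then show "finite (Sigma A (block k) - {piv k A})" by (simp add: finite_block)
    qed
    also have "\<dots> = (\<Sum>A\<in>Sub n i. (\<Sum>x\<in>A. k x) - 1)"
    proof (rule sum.cong[OF refl])
      fix A assume A: "A \<in> Sub n i"
      have fA: "A \<subseteq> {1..n}" using A by (simp add: Sub_def)
      then have fA: "finite A" "A \<subseteq> {1..n}" using finite_subset[of A "{1..n}"] by auto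
      have "card (Sigma A (block k)) = (\<Sum>x\<in>A. card (block k x))"
        using fA by (simp add: finite_block)
      also have "\<dots> = (\<Sum>x\<in>A. k x)"
      proof (rule sum.cong[OF refl])
        fix x assume "x \<in> A"
        then have "x \<ge> 1" using fA by auto
        then show "card (block k x) = k x" by (rule card_block)
      qed
      finally have "card (Sigma A (block k)) = (\<Sum>x\<in>A. k x)" .
      then show "card (Sigma A (block k) - {piv k A}) = (\<Sum>x\<in>A. k x) - 1"
        using card_Diff_singleton[OF piv_in(1)[OF kpos i2 A]] by simp
    qed
    finally show ?thesis .
  qed
  finally show ?thesis using count[OF kpos i2] by simp
qed

end
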